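(* Let $M\in[1,\infty[$, $L\in[1/2,\infty[$ and $T\in[0,\infty[$ with $T\ll M$, and let $h\in\mathbb Z$ and $k\in\mathbb Z_+$ be coprime; let $\overline h$ be an integer with $h\overline h\equiv1\pmod k$. Let $w$ be a weight function as described in the context. Then, for either choice of sign $\pm$, \[\int_{M/2}^{5M/2}w(x)\left|\sum_{L<n\leq2L}a(n)\,n^{-3/4}\,e\!\left(-n\,\frac{\overline h}k\right)e\!\left(\pm\frac{2\sqrt{n(x+T)}}k\right)\right|^2\mathrm dx\ll M\,L^{-1/2}+L^\varepsilon\,k\,M^{1/2+\varepsilon}.\] Moreover, if $\vartheta>0$ is fixed (and may be chosen arbitrarily small) and $L\ll M^{1-\vartheta}\,k^{-2}$, then \[\int_{M/2}^{5M/2}w(x)\left|\sum_{L<n\leq2L}a(n)\,n^{-3/4}\,e\!\left(-n\,\frac{\overline h}k\right)e\!\left(\pm\frac{2\sqrt{n(x+T)}}k\right)\right|^2\mathrm dx\ll M\,L^{-1/2}.\]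
   Context: $F$ is a fixed holomorphic cusp form of even weight $\kappa\in\mathbb Z_+$ for $\mathrm{SL}(2,\mathbb Z)$, with Fourier expansion normalized as $F(z)=\sum_{n\ge1}a(n)\,n^{(\kappa-1)/2}\,e(nz)$ for $\Im z>0$, where $e(t)=e^{2\pi i t}$. A weight function $w$ (depending on $M$) is a function in $C_c^\infty(\mathbb R_+)$ taking values in $[0,1]$, with $\mathrm{supp}\,w\subseteq[M/2,5M/2]$, $w\equiv1$ on $[M,2M]$, and $w^{(\nu)}(x)\ll_\nu M^{-\nu}$ for all $x\in\mathbb R_+$ and every integer $\nu\ge0$. The notation $f\ll g$ means $|f|\le C|g|$ for some constant $C>0$; $\varepsilon$ denotes an arbitrarily small fixed positive number, and implicit constants may depend on $\varepsilon$, $\vartheta$, $F$, the implicit constants for $w$, and the implicit constants in the hypotheses. *)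

theory Defs
  imports "HOL-Analysis.Analysis" "HOL-Number_Theory.Number_Theory"
begin

definition e :: "complex \<Rightarrow> complex" where
  "e t = exp (2 * of_real pi * \<i> * t)"

definition upper_half_plane :: "complex set" where
  "upper_half_plane = {z. Im z > 0}"

text \<open>The value a 0 is irrelevant (only a n for n >= 1 is used).\<close>
definition is_cusp_form :: "nat \<Rightarrow> (complex \<Rightarrow> complex) \<Rightarrow> (nat \<Rightarrow> complex) \<Rightarrow> bool" where
  "is_cusp_form \<kappa> F a \<longleftrightarrow>
     \<kappa> > 0 \<and> even \<kappa> \<and>
     F holomorphic_on upper_half_plane \<and>
     (\<forall>p q r s :: int. p * s - q * r = 1 \<longrightarrow>
        (\<forall>z\<in>upper_half_plane.
           F ((of_int p * z + of_int q) / (of_int r * z + of_int s))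
             = (of_int r * z + of_int s) ^ \<kappa> * F z)) \<and>
     (\<forall>z\<in>upper_half_plane.
        (\<lambda>n. if n = 0 then 0
              else a n * of_real (real n powr ((real \<kappa> - 1) / 2)) * e (of_nat n * z))
        sums F z)"

definition weight_fun :: "real \<Rightarrow> (nat \<Rightarrow> real) \<Rightarrow> (real \<Rightarrow> real) \<Rightarrow> bool" where
  "weight_fun M Cw w \<longleftrightarrow>
     (\<forall>\<nu> x. ((deriv ^^ \<nu>) w has_real_derivative (deriv ^^ Suc \<nu>) w x) (at x)) \<and>
     (\<forall>x. 0 \<le> w x \<and> w x \<le> 1) \<and>
     (\<forall>x. x < M / 2 \<or> 5 * M / 2 < x \<longrightarrow> w x = 0) \<and>
     (\<forall>x. M \<le> x \<and> x \<le> 2 * M \<longrightarrow> w x = 1) \<and>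
     (\<forall>\<nu> x. 0 < x \<longrightarrow> \<bar>(deriv ^^ \<nu>) w x\<bar> \<le> Cw \<nu> * M powr (- real \<nu>))"

definition exp_sum :: "(nat \<Rightarrow> complex) \<Rightarrow> int \<Rightarrow> int \<Rightarrow> real \<Rightarrow> real \<Rightarrow> real \<Rightarrow> real \<Rightarrow> complex" where
  "exp_sum a hb k T s L x =
     (\<Sum>n\<in>{n::nat. L < real n \<and> real n \<le> 2 * L}.
        a n * of_real (real n powr (-3/4))
          * e (of_real (- real n * real_of_int hb / real_of_int k))
          * e (of_real (s * 2 * sqrt (real n * (x + T)) / real_of_int k)))"

definition mean_square :: "(nat \<Rightarrow> complex) \<Rightarrow> int \<Rightarrow> int \<Rightarrow> real \<Rightarrow> real \<Rightarrow> real \<Rightarrow> real \<Rightarrow> (real \<Rightarrow> real) \<Rightarrow> real" where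
  "mean_square a hb k T s L M w =
     integral {M/2..5*M/2} (\<lambda>x. w x * (cmod (exp_sum a hb k T s L x))\<^sup>2)"

end

theory Submission
  imports Defs "HOL-Analysis.Kronecker_Approximation_Theorem"
begin


definition cc :: "nat \<Rightarrow> (nat \<Rightarrow> complex) \<Rightarrow> nat \<Rightarrow> complex" where
  "cc \<kappa> a n = (if n = 0 then 0 else a n * of_real (real n powr ((real \<kappa> - 1) / 2)))"

lemma norm_e: "norm (e t) = exp (-2 * pi * Im t)"
  unfolding e_def by (simp add: norm_exp_eq_Re)

lemma e_pow: "e (of_nat n * t) = e t ^ n"
  unfolding e_def by (metis exp_of_nat_mult mult.commute mult.left_commute)

lemma cusp_sums:
  assumes "is_cusp_form \<kappa> F a" "Im z > 0"
  shows "(\<lambda>n. cc \<kappa> a n * e (of_nat n * z)) sums F z"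
proof -
  have "(\<lambda>n. if n = 0 then 0
              else a n * of_real (real n powr ((real \<kappa> - 1) / 2)) * e (of_nat n * z)) sums F z"
    using assms unfolding is_cusp_form_def upper_half_plane_def by auto
  moreover have "(\<lambda>n. if n = 0 then 0
              else a n * of_real (real n powr ((real \<kappa> - 1) / 2)) * e (of_nat n * z))
     = (\<lambda>n. cc \<kappa> a n * e (of_nat n * z))"
    by (auto simp: cc_def fun_eq_iff)
  ultimately show ?thesis by simp
qed

lemma e_imag: "e (\<i> * of_real y) = of_real (exp (-2 * pi * y))"
proof -
  have "2 * of_real pi * \<i> * (\<i> * of_real y) = (of_real (-2 * pi * y) :: complex)"
    by (simp add: algebra_simps)
  then show ?thesis unfolding e_def by (simp only: exp_of_real)
qed

lemma cusp_abs_summable: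
  assumes "is_cusp_form \<kappa> F a" "y > 0"
  shows "summable (\<lambda>n. norm (cc \<kappa> a n) * exp (-2 * pi * real n * y))"
proof -
  define z0 where "z0 = \<i> * of_real (y/2)"
  have "Im z0 > 0" using assms by (simp add: z0_def)
  from cusp_sums[OF assms(1) this] have "summable (\<lambda>n. cc \<kappa> a n * e (of_nat n * z0))"
    by (rule sums_summable)
  then have s: "summable (\<lambda>n. cc \<kappa> a n * (of_real (exp (-2 * pi * (y/2)))) ^ n)"
    unfolding e_pow z0_def e_imag .
  have "norm (of_real (exp (-2 * pi * y)) :: complex) < norm (of_real (exp (-2 * pi * (y/2))) :: complex)"
    using assms by simp
  from powser_insidea[OF s this]
  have "summable (\<lambda>n. norm (cc \<kappa> a n * (of_real (exp (-2 * pi * y))) ^ n))" .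
  moreover have "\<And>n. norm (cc \<kappa> a n * (of_real (exp (-2 * pi * y))) ^ n) = norm (cc \<kappa> a n) * exp (-2 * pi * real n * y)"
    by (simp add: norm_mult norm_power exp_of_nat_mult[symmetric] algebra_simps)
  ultimately show ?thesis by simp
qed



lemma Im_moebius:
  fixes p q r s :: int and z :: complex
  assumes "p * s - q * r = 1" "Im z > 0"
  shows "of_int r * z + of_int s \<noteq> 0"
    and "Im ((of_int p * z + of_int q) / (of_int r * z + of_int s)) = Im z / (norm (of_int r * z + of_int s))\<^sup>2"
proof -
  show nz: "of_int r * z + of_int s \<noteq> 0"
  proof
    assume h: "of_int r * z + of_int s = 0"
    then have "Im (of_int r * z + of_int s) = 0" by simp
    then have "r = 0" using assms(2) by simp
    with h have "s = 0" by simp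
    with \<open>r = 0\<close> assms(1) show False by simp
  qed
  have "Im (of_int p * z + of_int q) * Re (of_int r * z + of_int s) - Re (of_int p * z + of_int q) * Im (of_int r * z + of_int s)
      = Im z * (of_int (p * s - q * r))"
    by (simp add: algebra_simps)
  also have "\<dots> = Im z" using assms(1) by simp
  finally show "Im ((of_int p * z + of_int q) / (of_int r * z + of_int s)) = Im z / (norm (of_int r * z + of_int s))\<^sup>2"
    by (simp add: Im_divide')
qed

lemma cusp_invariant:
  assumes cusp: "is_cusp_form \<kappa> F a" and "\<kappa> = 2 * m"
  assumes "p * s - q * r = 1" "Im z > 0"
  defines "w \<equiv> (of_int p * z + of_int q) / (of_int r * z + of_int s)"
  shows "norm (F w) * Im w ^ m = norm (F z) * Im z ^ m"
proof -
  define v where "v = of_int r * z + of_int s"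
  have nz: "v \<noteq> 0" and Imw: "Im w = Im z / (norm v)\<^sup>2"
    using Im_moebius[OF assms(3,4)] by (auto simp: v_def w_def)
  have "F w = v ^ \<kappa> * F z"
    using cusp assms(3,4) unfolding is_cusp_form_def upper_half_plane_def w_def v_def by auto
  then have "norm (F w) = ((norm v)\<^sup>2) ^ m * norm (F z)"
    by (simp add: norm_mult norm_power assms(2) power_mult)
  then show ?thesis using nz by (simp add: Imw power_divide)
qed

lemma pow_exp_bound:
  fixes x :: real assumes "x \<ge> 0"
  shows "x ^ m \<le> fact m * exp x"
proof -
  have eq: "(\<lambda>n. x ^ n /\<^sub>R fact n) = (\<lambda>n. x ^ n / fact n)"
    by (simp add: fun_eq_iff real_scaleR_def divide_inverse mult.commute)
  have s: "(\<lambda>n. x ^ n / fact n) sums exp x"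
    using exp_converges[of x] unfolding eq .
  have "sum (\<lambda>n. x ^ n / fact n) {m} \<le> suminf (\<lambda>n. x ^ n / fact n)"
    using assms s by (intro sum_le_suminf) (auto simp: sums_iff)
  then have "x ^ m / fact m \<le> exp x" using s by (simp add: sums_iff)
  then show ?thesis by (simp add: field_simps)
qed



lemma reduce_to_fd:
  fixes z :: complex
  assumes "Im z > 0"
  shows "\<exists>p q r s :: int. p * s - q * r = 1 \<and>
           Im ((of_int p * z + of_int q) / (of_int r * z + of_int s)) \<ge> 1/5"
proof (cases "Im z \<ge> 1/5")
  case True
  then show ?thesis by (intro exI[of _ 1] exI[of _ 0]) simp
next
  case False
  define y where "y = Im z"
  have y0: "0 < y" "y < 1/5" using assms False by (auto simp: y_def)
  define N where "N = nat \<lfloor>1 / sqrt y\<rfloor>"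
  have sq: "sqrt y > 0" "sqrt y * sqrt y = y" using y0 by auto
  have "1 / sqrt y > 2"
  proof -
    have "sqrt y < sqrt (1/4)" using y0 by (intro real_sqrt_less_mono) auto
    also have "sqrt (1/4) = (1/2::real)" by (simp add: real_sqrt_divide)
    finally show ?thesis using sq by (simp add: field_simps)
  qed
  then have Nge: "real N > 1 / sqrt y - 1" and Nle: "real N \<le> 1 / sqrt y" and "N > 0"
  proof -
    have fl: "real_of_int \<lfloor>1 / sqrt y\<rfloor> \<le> 1 / sqrt y" "1 / sqrt y < real_of_int \<lfloor>1 / sqrt y\<rfloor> + 1"
      by (rule of_int_floor_le, rule real_of_int_floor_add_one_gt)
    have "\<lfloor>1 / sqrt y\<rfloor> \<ge> 2" using \<open>1 / sqrt y > 2\<close> by (simp add: le_floor_iff)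
    then have "0 \<le> \<lfloor>1 / sqrt y\<rfloor>" by linarith
    then have "real N = real_of_int \<lfloor>1 / sqrt y\<rfloor>" unfolding N_def by (simp only: of_nat_nat)
    then show "real N > 1 / sqrt y - 1" "real N \<le> 1 / sqrt y" "N > 0"
      using fl \<open>\<lfloor>1 / sqrt y\<rfloor> \<ge> 2\<close> unfolding N_def by linarith+
  qed
  obtain h k where hk: "coprime h k" "0 < k" "k \<le> int N" "\<bar>of_int k * Re z - of_int h\<bar> < 1/N"
    using Dirichlet_approx_coprime[OF \<open>N > 0\<close>, of "Re z"] by blast
  obtain u v where uv: "u * k + v * h = 1"
    using hk(1) by (metis bezout_int coprime_iff_gcd_eq_1 gcd.commute)
  define p where "p = -v" define q where "q = -u" define r where "r = k" define s where "s = -h"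
  have det: "p * s - q * r = 1" using uv by (simp add: p_def q_def r_def s_def algebra_simps)
  have Nh: "real N \<ge> 1 / (2 * sqrt y)" using Nge \<open>1 / sqrt y > 2\<close> sq by (simp add: field_simps)
  have "(norm (of_int r * z + of_int s))\<^sup>2 = (of_int k * Re z - of_int h)\<^sup>2 + (of_int k * y)\<^sup>2"
    by (simp add: cmod_power2 r_def s_def y_def)
  also have "\<dots> \<le> (1 / N)\<^sup>2 + (real N * y)\<^sup>2"
  proof (intro add_mono)
    show "(of_int k * Re z - of_int h)\<^sup>2 \<le> (1 / real N)\<^sup>2"
      using power_mono[of "\<bar>of_int k * Re z - of_int h\<bar>" "1 / real N" 2] hk(4) by simp
    have "of_int k * y \<le> real N * y" using hk(3) y0 by (intro mult_right_mono) auto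
    then show "(of_int k * y)\<^sup>2 \<le> (real N * y)\<^sup>2" using hk(2) y0 by (intro power_mono) auto
  qed
  also have "(1 / N)\<^sup>2 \<le> 4 * y"
  proof -
    have "1 / real N \<le> 2 * sqrt y" using Nh sq \<open>N > 0\<close> by (simp add: field_simps)
    then have "(1 / real N)\<^sup>2 \<le> (2 * sqrt y)\<^sup>2" by (intro power_mono) auto
    then show ?thesis using y0 by (simp add: power_mult_distrib)
  qed
  also have "(real N * y)\<^sup>2 \<le> y"
  proof -
    have "real N * sqrt y \<le> 1" using Nle sq by (simp add: field_simps)
    then have "(real N * sqrt y)\<^sup>2 \<le> 1" using sq by (intro power_le_one) auto
    then have "(real N)\<^sup>2 * y \<le> 1" using y0 by (simp add: power_mult_distrib)
    then have "(real N)\<^sup>2 * y * y \<le> y" using y0 by (simp add: mult_right_le_one_le)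
    then show ?thesis by (simp add: power2_eq_square algebra_simps)
  qed
  finally have le: "(norm (of_int r * z + of_int s))\<^sup>2 \<le> 5 * y" by simp
  have Im: "Im ((of_int p * z + of_int q) / (of_int r * z + of_int s)) = y / (norm (of_int r * z + of_int s))\<^sup>2"
   and nz: "of_int r * z + of_int s \<noteq> 0"
    using Im_moebius[OF det assms] by (auto simp: y_def)
  have "1/5 \<le> y / (norm (of_int r * z + of_int s))\<^sup>2"
    using le nz y0 by (simp add: field_simps)
  then show ?thesis using det Im by (intro exI[of _ p] exI[of _ q] exI[of _ r] exI[of _ s]) simp
qed



definition Acoef :: "nat \<Rightarrow> (nat \<Rightarrow> complex) \<Rightarrow> real" where
  "Acoef \<kappa> a = (\<Sum>n. norm (cc \<kappa> a n) * exp (-2 * pi * real n * (1/10)))"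

definition Khecke :: "nat \<Rightarrow> (nat \<Rightarrow> complex) \<Rightarrow> real" where
  "Khecke \<kappa> a = Acoef \<kappa> a * exp (2 * pi / 10) * fact (\<kappa> div 2)"

lemma norm_e_nat: "norm (e (of_nat n * w)) = exp (-2 * pi * real n * Im w)"
  by (simp add: norm_e)

lemma Acoef_nonneg:
  assumes "is_cusp_form \<kappa> F a"
  shows "Acoef \<kappa> a \<ge> 0"
  unfolding Acoef_def using cusp_abs_summable[OF assms, of "1/10"]
  by (intro suminf_nonneg) auto

lemma Khecke_nonneg:
  assumes "is_cusp_form \<kappa> F a"
  shows "Khecke \<kappa> a \<ge> 0"
  unfolding Khecke_def using Acoef_nonneg[OF assms] by simp

lemma hecke_fd:
  assumes cusp: "is_cusp_form \<kappa> F a" and w: "Im w \<ge> 1/5"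
  shows "norm (F w) * Im w ^ (\<kappa> div 2) \<le> Khecke \<kappa> a"
proof -
  define v where "v = Im w"
  define m where "m = \<kappa> div 2"
  have v0: "v > 0" "v \<ge> 1/5" using w by (auto simp: v_def)
  have sm: "(\<lambda>n. cc \<kappa> a n * e (of_nat n * w)) sums F w"
    using cusp_sums[OF cusp] v0 by (auto simp: v_def)
  have nrm: "\<And>n. norm (cc \<kappa> a n * e (of_nat n * w)) = norm (cc \<kappa> a n) * exp (-2 * pi * real n * v)"
    by (simp add: norm_mult norm_e_nat v_def)
  have s1: "summable (\<lambda>n. norm (cc \<kappa> a n) * exp (-2 * pi * real n * v))"
    using cusp_abs_summable[OF cusp v0(1)] .
  have s2: "summable (\<lambda>n. norm (cc \<kappa> a n) * exp (-2 * pi * real n * (1/10)))"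
    using cusp_abs_summable[OF cusp, of "1/10"] by simp
  have "norm (F w) \<le> (\<Sum>n. norm (cc \<kappa> a n) * exp (-2 * pi * real n * v))"
    using summable_norm[of "\<lambda>n. cc \<kappa> a n * e (of_nat n * w)"] s1 sm
    by (simp add: nrm sums_iff)
  also have "\<dots> \<le> (\<Sum>n. norm (cc \<kappa> a n) * exp (-2 * pi * real n * (1/10)) * (exp (2 * pi / 10) * exp (-2 * pi * v)))"
  proof (rule suminf_le[OF _ s1 summable_mult2[OF s2]])
    fix n
    show "norm (cc \<kappa> a n) * exp (-2 * pi * real n * v) \<le> norm (cc \<kappa> a n) * exp (-2 * pi * real n * (1/10)) * (exp (2 * pi / 10) * exp (-2 * pi * v))"
    proof (cases "n = 0")
      case True then show ?thesis by (simp add: cc_def)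
    next
      case False
      have "(real n - 1) * (v - 1/10) \<ge> 0" using False v0 by (intro mult_nonneg_nonneg) auto
      then have "0 \<le> 2 * pi * ((real n - 1) * (v - 1/10))" by simp
      moreover have "-2 * pi * real n * (1/10) + (2 * pi / 10 + -2 * pi * v) - (-2 * pi * real n * v) = 2 * pi * ((real n - 1) * (v - 1/10))"
        by (simp add: field_simps)
      ultimately have "-2 * pi * real n * v \<le> -2 * pi * real n * (1/10) + (2 * pi / 10 + -2 * pi * v)"
        by linarith
      then have "exp (-2 * pi * real n * v) \<le> exp (-2 * pi * real n * (1/10)) * (exp (2 * pi / 10) * exp (-2 * pi * v))"
        by (simp add: exp_add[symmetric])
      then show ?thesis by (simp add: mult_left_mono mult.assoc)
    qed
  qed
  also have "\<dots> = Acoef \<kappa> a * (exp (2 * pi / 10) * exp (-2 * pi * v))"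
    unfolding Acoef_def by (rule suminf_mult2[OF s2, symmetric])
  finally have Fw: "norm (F w) \<le> Acoef \<kappa> a * (exp (2 * pi / 10) * exp (-2 * pi * v))" .
  have vm: "v ^ m * exp (-2 * pi * v) \<le> fact m"
  proof -
    have "v ^ m \<le> fact m * exp v" using pow_exp_bound[of v m] v0 by simp
    also have "exp v \<le> exp (2 * pi * v)" using v0 pi_gt3 by simp
    finally have "v ^ m \<le> fact m * exp (2 * pi * v)" by (simp add: mult_left_mono)
    then have "v ^ m * exp (-2 * pi * v) \<le> fact m * exp (2 * pi * v) * exp (-2 * pi * v)"
      by (simp add: mult_right_mono)
    also have "\<dots> = fact m" by (simp add: mult.assoc exp_add[symmetric])
    finally show ?thesis .
  qed
  have "norm (F w) * v ^ m \<le> Acoef \<kappa> a * (exp (2 * pi / 10) * exp (-2 * pi * v)) * v ^ m"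
    using Fw v0 by (simp add: mult_right_mono)
  also have "\<dots> = Acoef \<kappa> a * exp (2 * pi / 10) * (v ^ m * exp (-2 * pi * v))" by (simp add: ac_simps)
  also have "\<dots> \<le> Acoef \<kappa> a * exp (2 * pi / 10) * fact m"
    using vm Acoef_nonneg[OF cusp] by (intro mult_left_mono) auto
  finally show ?thesis by (simp add: Khecke_def v_def m_def)
qed

lemma hecke:
  assumes cusp: "is_cusp_form \<kappa> F a" and z: "Im z > 0"
  shows "norm (F z) * Im z ^ (\<kappa> div 2) \<le> Khecke \<kappa> a"
proof -
  obtain p q r s :: int where det: "p * s - q * r = 1"
    and big: "Im ((of_int p * z + of_int q) / (of_int r * z + of_int s)) \<ge> 1/5"
    using reduce_to_fd[OF z] by blast
  have k: "\<kappa> = 2 * (\<kappa> div 2)" using cusp unfolding is_cusp_form_def by auto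
  have "norm (F z) * Im z ^ (\<kappa> div 2) = norm (F ((of_int p * z + of_int q) / (of_int r * z + of_int s)))
      * Im ((of_int p * z + of_int q) / (of_int r * z + of_int s)) ^ (\<kappa> div 2)"
    using cusp_invariant[OF cusp k det z] by simp
  also have "\<dots> \<le> Khecke \<kappa> a" by (rule hecke_fd[OF cusp big])
  finally show ?thesis .
qed



lemma e_add: "e (a + b) = e a * e b"
  unfolding e_def by (simp add: distrib_left exp_add)

lemma e_cnj_real: "cnj (e (of_real t)) = e (of_real (- t))"
  unfolding e_def by (simp add: exp_cnj)

lemma e_real_eq_1_iff: "e (of_real t) = 1 \<longleftrightarrow> (\<exists>n::int. t = of_int n)"
proof -
  have "e (of_real t) = exp (2 * of_real pi * \<i> * of_real t)" by (simp add: e_def)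
  then show ?thesis by (auto simp: exp_eq_1)
qed

lemma sum_e_roots:
  fixes k :: int and J :: nat
  assumes "J > 0" "\<bar>k\<bar> < int J"
  shows "(\<Sum>j<J. e (of_real (real_of_int k * real j / real J))) = (if k = 0 then of_nat J else 0)"
proof (cases "k = 0")
  case True
  then show ?thesis by (simp add: e_def)
next
  case False
  define \<omega> where "\<omega> = e (of_real (real_of_int k / real J))"
  have terms: "e (of_real (real_of_int k * real j / real J)) = \<omega> ^ j" for j
  proof -
    have "of_real (real_of_int k * real j / real J) = of_nat j * (of_real (real_of_int k / real J) :: complex)"
      by simp
    then show ?thesis unfolding \<omega>_def by (simp only: e_pow)
  qed
  have "\<omega> ^ J = e (of_real (real_of_int k))"
    using terms[of J] assms(1) by simp
  also have "\<dots> = 1" by (subst e_real_eq_1_iff) auto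
  finally have wJ: "\<omega> ^ J = 1" .
  have "\<omega> \<noteq> 1"
  proof
    assume "\<omega> = 1"
    then obtain n :: int where n: "real_of_int k / real J = of_int n"
      unfolding \<omega>_def e_real_eq_1_iff by blast
    then have "real_of_int k = of_int n * real J" using assms(1) by (simp add: field_simps)
    then have kn: "k = n * int J" by (metis of_int_eq_iff of_int_mult of_int_of_nat_eq)
    with False have "n \<noteq> 0" by auto
    then have "\<bar>n\<bar> * int J \<ge> int J" using assms(1) by (simp add: mult_le_cancel_right1)
    then show False using kn assms(2) by (simp add: abs_mult)
  qed
  then show ?thesis unfolding terms using False wJ by (simp add: sum_gp_strict)
qed

lemma orth:
  fixes d :: "nat \<Rightarrow> complex"
  assumes "0 < N" "N \<le> J"
  shows "(\<Sum>j<J. (norm (\<Sum>n<N. d n * e (of_real (real n * real j / real J))))\<^sup>2)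
         = real J * (\<Sum>n<N. (norm (d n))\<^sup>2)"
proof -
  define P where "P j = (\<Sum>n<N. d n * e (of_real (real n * real j / real J)))" for j
  have J0: "J > 0" using assms by simp
  have PP: "P j * cnj (P j) = (\<Sum>n<N. \<Sum>m<N. d n * cnj (d m) * e (of_real (real_of_int (int n - int m) * real j / real J)))" for j
  proof -
    have "P j * cnj (P j) = (\<Sum>n<N. \<Sum>m<N. (d n * e (of_real (real n * real j / real J))) * cnj (d m * e (of_real (real m * real j / real J))))"
      unfolding P_def by (simp add: sum_product cnj_sum)
    also have "\<dots> = (\<Sum>n<N. \<Sum>m<N. d n * cnj (d m) * e (of_real (real_of_int (int n - int m) * real j / real J)))"
    proof (intro sum.cong refl)
      fix n m
      have "e (of_real (real n * real j / real J)) * cnj (e (of_real (real m * real j / real J)))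
          = e (of_real (real n * real j / real J) + of_real (- (real m * real j / real J)))"
        by (simp only: e_cnj_real e_add)
      also have "of_real (real n * real j / real J) + of_real (- (real m * real j / real J)) = (of_real (real_of_int (int n - int m) * real j / real J) :: complex)"
        by (simp add: diff_divide_distrib algebra_simps)
      finally show "(d n * e (of_real (real n * real j / real J))) * cnj (d m * e (of_real (real m * real j / real J)))
           = d n * cnj (d m) * e (of_real (real_of_int (int n - int m) * real j / real J))"
        by (simp add: ac_simps)
    qed
    finally show ?thesis .
  qed
  have "complex_of_real (\<Sum>j<J. (norm (P j))\<^sup>2) = (\<Sum>j<J. P j * cnj (P j))"
    unfolding of_real_sum by (simp only: complex_norm_square)
  also have "\<dots> = (\<Sum>j<J. \<Sum>n<N. \<Sum>m<N. d n * cnj (d m) * e (of_real (real_of_int (int n - int m) * real j / real J)))"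
    by (simp add: PP)
  also have "\<dots> = (\<Sum>n<N. \<Sum>m<N. d n * cnj (d m) * (\<Sum>j<J. e (of_real (real_of_int (int n - int m) * real j / real J))))"
    by (simp add: sum.swap[of _ "{..<J}"] sum_distrib_left)
  also have "\<dots> = (\<Sum>n<N. \<Sum>m<N. d n * cnj (d m) * (if n = m then of_nat J else 0))"
  proof (intro sum.cong refl)
    fix n m assume "n \<in> {..<N}" "m \<in> {..<N}"
    then have "\<bar>int n - int m\<bar> < int J" using assms by auto
    then show "d n * cnj (d m) * (\<Sum>j<J. e (of_real (real_of_int (int n - int m) * real j / real J)))
       = d n * cnj (d m) * (if n = m then of_nat J else 0)"
      using sum_e_roots[OF J0, of "int n - int m"] by (simp only:) simp
  qed
  also have "\<dots> = (\<Sum>n<N. d n * cnj (d n) * of_nat J)"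
    by (simp add: if_distrib[of "\<lambda>x. _ * x"] sum.delta cong: if_cong)
  also have "\<dots> = complex_of_real (real J * (\<Sum>n<N. (norm (d n))\<^sup>2))"
    by (simp add: complex_norm_square[symmetric] sum_distrib_left ac_simps)
  finally show ?thesis unfolding P_def of_real_eq_iff .
qed



lemma e_shift: "e (of_nat n * (of_real x + \<i> * of_real y)) = e (of_real (real n * x)) * of_real (exp (-2 * pi * real n * y))"
proof -
  have "of_nat n * (of_real x + \<i> * of_real y) = of_real (real n * x) + \<i> * of_real (real n * y)"
    by (simp add: algebra_simps)
  then show ?thesis by (simp only: e_add e_imag) (simp add: algebra_simps)
qed

lemma coef_sq_bound:
  assumes cusp: "is_cusp_form \<kappa> F a" and y: "y > 0"
  shows "(\<Sum>n<N. (norm (cc \<kappa> a n))\<^sup>2 * exp (-4 * pi * real n * y))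
           \<le> 4 * ((Khecke \<kappa> a + 1) / y ^ (\<kappa> div 2))\<^sup>2"
proof -
  define m where "m = \<kappa> div 2"
  define K where "K = Khecke \<kappa> a"
  define B where "B = (K + 1) / y ^ m"
  have K0: "K \<ge> 0" using Khecke_nonneg[OF cusp] by (simp add: K_def)
  have B0: "B > 0" using K0 y by (simp add: B_def)
  have FB: "norm (F (of_real x + \<i> * of_real y)) \<le> B" for x
  proof -
    have "norm (F (of_real x + \<i> * of_real y)) * y ^ m \<le> K"
      using hecke[OF cusp, of "of_real x + \<i> * of_real y"] y by (simp add: K_def m_def)
    then have "norm (F (of_real x + \<i> * of_real y)) \<le> K / y ^ m" using y by (simp add: field_simps)
    also have "\<dots> \<le> B" unfolding B_def using y by (simp add: divide_right_mono)
    finally show ?thesis .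
  qed
  define d where "d n = cc \<kappa> a n * of_real (exp (-2 * pi * real n * y))" for n
  have nd: "norm (d n) = norm (cc \<kappa> a n) * exp (-2 * pi * real n * y)" for n
    by (simp add: d_def norm_mult)
  have sd: "summable (\<lambda>n. norm (d n))" unfolding nd by (rule cusp_abs_summable[OF cusp y])
  obtain N0 where N0: "\<And>n. n \<ge> N0 \<Longrightarrow> norm (\<Sum>i. norm (d (i + n))) < B"
    using suminf_exist_split[OF B0 sd] by blast
  define N1 where "N1 = max N (max N0 1)"
  have N1: "N1 \<ge> N" "N1 \<ge> N0" "N1 > 0" by (auto simp: N1_def)
  define P where "P x = (\<Sum>n<N1. d n * e (of_real (real n * x)))" for x
  have PB: "norm (P x) \<le> 2 * B" for x
  proof -
    define f where "f n = cc \<kappa> a n * e (of_nat n * (of_real x + \<i> * of_real y))" for n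
    have f_eq: "f n = d n * e (of_real (real n * x))" for n
      by (simp add: f_def d_def e_shift)
    have sf: "f sums F (of_real x + \<i> * of_real y)"
      unfolding f_def using cusp_sums[OF cusp] y by simp
    have nf: "norm (f n) = norm (d n)" for n by (simp add: f_eq norm_mult norm_e)
    have snf: "summable (\<lambda>i. norm (f (i + N1)))"
      unfolding nf using summable_iff_shift[of "\<lambda>n. norm (d n)" N1] sd by simp
    have "F (of_real x + \<i> * of_real y) = (\<Sum>i. f (i + N1)) + P x"
      using suminf_split_initial_segment[OF sums_summable[OF sf], of N1] sf
      by (simp add: sums_iff P_def f_eq)
    then have "norm (P x) \<le> norm (F (of_real x + \<i> * of_real y)) + norm (\<Sum>i. f (i + N1))"
      by (metis add_diff_cancel_left' norm_triangle_ineq4)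
    also have "norm (\<Sum>i. f (i + N1)) \<le> (\<Sum>i. norm (f (i + N1)))"
      by (rule summable_norm[OF snf])
    also have "\<dots> = (\<Sum>i. norm (d (i + N1)))" by (simp add: nf)
    also have "\<dots> \<le> B" using N0[OF N1(2)] by simp
    finally show ?thesis using FB[of x] by simp
  qed
  have "real N1 * (\<Sum>n<N1. (norm (d n))\<^sup>2) = (\<Sum>j<N1. (norm (P (real j / real N1)))\<^sup>2)"
    using orth[OF N1(3) order_refl, of d] by (simp add: P_def)
  also have "\<dots> \<le> (\<Sum>j<N1. (2 * B)\<^sup>2)"
    using PB by (intro sum_mono power_mono) auto
  also have "\<dots> = real N1 * (2 * B)\<^sup>2" by simp
  finally have "(\<Sum>n<N1. (norm (d n))\<^sup>2) \<le> (2 * B)\<^sup>2" using N1(3) by simp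
  moreover have "(\<Sum>n<N. (norm (d n))\<^sup>2) \<le> (\<Sum>n<N1. (norm (d n))\<^sup>2)"
    using N1(1) by (intro sum_mono2) auto
  moreover have "(norm (d n))\<^sup>2 = (norm (cc \<kappa> a n))\<^sup>2 * exp (-4 * pi * real n * y)" for n
  proof -
    have "(exp (-2 * pi * real n * y))\<^sup>2 = exp (-4 * pi * real n * y)"
      by (simp add: power2_eq_square exp_add[symmetric])
    then show ?thesis by (simp add: nd power_mult_distrib)
  qed
  ultimately have X: "(\<Sum>n<N. (norm (cc \<kappa> a n))\<^sup>2 * exp (-4 * pi * real n * y)) \<le> (2 * B)\<^sup>2"
    by simp
  have "(2 * B)\<^sup>2 = 4 * B\<^sup>2" by (simp add: power2_eq_square)
  with X show ?thesis by (simp only: B_def K_def m_def)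
qed



definition Ca :: "nat \<Rightarrow> (nat \<Rightarrow> complex) \<Rightarrow> real" where
  "Ca \<kappa> a = 4 * (Khecke \<kappa> a + 1)\<^sup>2 * exp (8 * pi)"

lemma nat_le_ceil:
  assumes "real x \<le> t" shows "x \<le> nat \<lceil>t\<rceil>"
proof -
  have "real x \<le> of_int \<lceil>t\<rceil>" using assms le_of_int_ceiling order_trans by blast
  then have "int x \<le> \<lceil>t\<rceil>" by (metis of_int_le_iff of_int_of_nat_eq)
  then show ?thesis by (metis le_nat_iff of_nat_0_le_iff order_trans)
qed

lemma dyadic_finite: "finite {n::nat. L < real n \<and> real n \<le> 2 * L}"
proof -
  have "{n::nat. L < real n \<and> real n \<le> 2 * L} \<subseteq> {..nat \<lceil>2 * L\<rceil>}"
    by (auto intro: nat_le_ceil)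
  then show ?thesis by (rule finite_subset) simp
qed

lemma dyadic_coef:
  assumes cusp: "is_cusp_form \<kappa> F a" and L: "L \<ge> 1/2"
  shows "(\<Sum>n\<in>{n::nat. L < real n \<and> real n \<le> 2 * L}. (norm (a n))\<^sup>2) \<le> Ca \<kappa> a * L"
proof -
  define S where "S = {n::nat. L < real n \<and> real n \<le> 2 * L}"
  define k1 where "k1 = real \<kappa> - 1"
  define m where "m = \<kappa> div 2"
  define K where "K = Khecke \<kappa> a"
  have kap: "\<kappa> > 0" "even \<kappa>" using cusp unfolding is_cusp_form_def by auto
  then have km: "\<kappa> = 2 * m" by (simp add: m_def)
  have "\<kappa> \<ge> 2" using kap(1) km by presburger
  then have k1: "k1 \<ge> 1" unfolding k1_def by simp
  have L0: "L > 0" using L by simp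
  have finS: "finite S" unfolding S_def by (rule dyadic_finite)
  define N where "N = Suc (nat \<lceil>2 * L\<rceil>)"
  have SN: "S \<subseteq> {..<N}"
    unfolding S_def N_def
    by (auto simp: less_Suc_eq_le intro: nat_le_ceil)
  have trm: "(norm (a n))\<^sup>2 * (L powr k1 * exp (-8 * pi)) \<le> (norm (cc \<kappa> a n))\<^sup>2 * exp (-4 * pi * real n * (1 / L))"
    if "n \<in> S" for n
  proof -
    have n: "L < real n" "real n \<le> 2 * L" using that by (auto simp: S_def)
    then have n0: "n > 0" using L0 by (cases n) auto
    have "(norm (cc \<kappa> a n))\<^sup>2 = (norm (a n))\<^sup>2 * (real n powr (k1 / 2))\<^sup>2"
      using n0 by (simp add: cc_def norm_mult power_mult_distrib k1_def)
    also have "(real n powr (k1 / 2))\<^sup>2 = real n powr k1"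
      by (simp add: power2_eq_square powr_add[symmetric])
    finally have cc: "(norm (cc \<kappa> a n))\<^sup>2 = (norm (a n))\<^sup>2 * real n powr k1" .
    have p: "L powr k1 \<le> real n powr k1" using n L0 k1 by (intro powr_mono2) auto
    have "-8 * pi \<le> -4 * pi * real n * (1 / L)"
    proof -
      have "real n * (1 / L) \<le> 2" using n L0 by (simp add: field_simps)
      then have "4 * pi * (real n * (1 / L)) \<le> 4 * pi * 2" using pi_gt_zero by (intro mult_left_mono) auto
      then show ?thesis by (simp add: algebra_simps)
    qed
    then have ex: "exp (-8 * pi) \<le> exp (-4 * pi * real n * (1 / L))" by simp
    have "L powr k1 * exp (-8 * pi) \<le> real n powr k1 * exp (-4 * pi * real n * (1 / L))"
      using p ex by (intro mult_mono) auto
    then show ?thesis unfolding cc by (simp add: mult_left_mono mult.assoc)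
  qed
  have "(\<Sum>n\<in>S. (norm (a n))\<^sup>2) * (L powr k1 * exp (-8 * pi))
      = (\<Sum>n\<in>S. (norm (a n))\<^sup>2 * (L powr k1 * exp (-8 * pi)))" by (simp add: sum_distrib_right)
  also have "\<dots> \<le> (\<Sum>n\<in>S. (norm (cc \<kappa> a n))\<^sup>2 * exp (-4 * pi * real n * (1 / L)))"
    using trm by (intro sum_mono) auto
  also have "\<dots> \<le> (\<Sum>n<N. (norm (cc \<kappa> a n))\<^sup>2 * exp (-4 * pi * real n * (1 / L)))"
    using SN by (intro sum_mono2) auto
  also have "\<dots> \<le> 4 * ((K + 1) / (1 / L) ^ m)\<^sup>2"
    using coef_sq_bound[OF cusp, of "1/L" N] L0 by (simp add: K_def m_def)
  also have "\<dots> = 4 * (K + 1)\<^sup>2 * L powr (real \<kappa>)"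
  proof -
    have "((K + 1) / (1 / L) ^ m)\<^sup>2 = (K + 1)\<^sup>2 * L ^ (2 * m)"
      by (simp add: power_divide power_mult_distrib power_mult[symmetric] mult.commute)
    also have "L ^ (2 * m) = L powr (real \<kappa>)" using L0 km powr_realpow[of L "2 * m"] by simp
    finally show ?thesis by simp
  qed
  also have "L powr (real \<kappa>) = L powr k1 * L"
    using L0 powr_add[of L "real \<kappa> - 1" 1] by (simp add: k1_def)
  finally have X: "(\<Sum>n\<in>S. (norm (a n))\<^sup>2) * (L powr k1 * exp (-8 * pi)) \<le> 4 * (K + 1)\<^sup>2 * (L powr k1 * L)" .
  have pos: "L powr k1 * exp (-8 * pi) > 0" using L0 by simp
  have "(\<Sum>n\<in>S. (norm (a n))\<^sup>2) \<le> 4 * (K + 1)\<^sup>2 * (L powr k1 * L) / (L powr k1 * exp (-8 * pi))"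
    by (subst pos_le_divide_eq[OF pos]) (rule X)
  also have "\<dots> = 4 * (K + 1)\<^sup>2 * exp (8 * pi) * L"
    using L0 by (simp add: field_simps exp_minus)
  finally show ?thesis by (simp add: S_def Ca_def K_def)
qed



lemma weight_deriv:
  assumes "weight_fun M Cw w"
  shows "(w has_real_derivative deriv w x) (at x)"
proof -
  have "((deriv ^^ 0) w has_real_derivative (deriv ^^ Suc 0) w x) (at x)"
    using assms unfolding weight_fun_def by blast
  then show ?thesis by simp
qed

lemma weight_cont: assumes "weight_fun M Cw w" shows "continuous_on A w"
  using weight_deriv[OF assms] by (meson DERIV_isCont continuous_at_imp_continuous_on)

lemma weight_ends:
  assumes wf: "weight_fun M Cw w"
  shows "w (M/2) = 0" "w (5*M/2) = 0"
proof -
  have c: "continuous_on A w" for A by (rule weight_cont[OF wf])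
  have z: "\<And>x. x < M/2 \<or> 5 * M / 2 < x \<Longrightarrow> w x = 0" using wf unfolding weight_fun_def by blast
  show "w (M/2) = 0"
    by (rule continuous_constant_on_closure[of "{..<M/2}" w 0]) (use c z in auto)
  show "w (5*M/2) = 0"
    by (rule continuous_constant_on_closure[of "{5*M/2<..}" w 0]) (use c z in auto)
qed

lemma weight_bounds:
  assumes wf: "weight_fun M Cw w" and "M > 0"
  shows "\<And>x. \<bar>w x\<bar> \<le> 1" "\<And>x. 0 \<le> w x" "\<And>x. x > 0 \<Longrightarrow> \<bar>deriv w x\<bar> \<le> Cw 1 / M"
proof -
  show "\<And>x. \<bar>w x\<bar> \<le> 1" "\<And>x. 0 \<le> w x" using wf unfolding weight_fun_def by auto
  fix x :: real assume "x > 0"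
  then have "\<bar>(deriv ^^ 1) w x\<bar> \<le> Cw 1 * M powr (- real 1)" using wf unfolding weight_fun_def by blast
  then show "\<bar>deriv w x\<bar> \<le> Cw 1 / M" using assms(2) by (simp add: powr_minus divide_inverse)
qed



lemma norm_e_real [simp]: "norm (e (of_real t)) = 1"
  by (simp add: norm_e)

lemma osc:
  fixes w w' :: "real \<Rightarrow> real"
  assumes wd: "\<And>x. (w has_real_derivative w' x) (at x)"
    and w0: "w (M/2) = 0" "w (5*M/2) = 0"
    and wb: "\<And>x. \<bar>w x\<bar> \<le> 1" and w'b: "\<And>x. x \<in> {M/2..5*M/2} \<Longrightarrow> \<bar>w' x\<bar> \<le> D / M"
    and M: "M \<ge> 1" and T: "T \<ge> 0" "T \<le> CT * M" and \<beta>: "\<beta> \<noteq> 0" and D: "D \<ge> 0"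
  shows "norm (integral {M/2..5*M/2} (\<lambda>x. of_real (w x) * e (of_real (\<beta> * sqrt (x + T)))))
          \<le> 2 * sqrt M * (D * sqrt (5/2 + CT) + 1) / (pi * \<bar>\<beta>\<bar>)"
proof -
  define a where "a = M/2"
  define b where "b = 5*M/2"
  have ab: "a \<le> b" using M by (simp add: a_def b_def)
  define c :: complex where "c = 2 * of_real pi * \<i> * of_real \<beta>"
  have c0: "c \<noteq> 0" using \<beta> by (simp add: c_def)
  have nc: "norm c = 2 * pi * \<bar>\<beta>\<bar>" by (simp add: c_def norm_mult)
  define u where "u x = sqrt (x + T)" for x
  define u' where "u' x = 1 / (2 * sqrt (x + T))" for x
  define E where "E x = exp (c * of_real (u x))" for x
  have E_eq: "E x = e (of_real (\<beta> * sqrt (x + T)))" for x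
    by (simp add: E_def e_def c_def u_def ac_simps)
  define p where "p x = 2 * w x * u x" for x
  define p' where "p' x = 2 * (w' x * u x + w x * u' x)" for x
  define g where "g x = of_real (p x) * E x / c" for x
  define f where "f x = of_real (w x) * E x" for x
  define h where "h x = of_real (p' x) * E x / c" for x
  have pos: "x + T > 0" if "x \<in> {a..b}" for x using that M T by (auto simp: a_def)
  have ud: "(u has_real_derivative u' x) (at x)" if "x \<in> {a..b}" for x
    unfolding u_def u'_def using pos[OF that]
    by (auto intro!: derivative_eq_intros simp: inverse_eq_divide)
  have pd: "(p has_real_derivative p' x) (at x)" if "x \<in> {a..b}" for x
    unfolding p_def p'_def using ud[OF that] wd[of x]
    by (auto intro!: derivative_eq_intros simp: algebra_simps)
  have Ed: "(E has_vector_derivative (of_real (u' x) * (c * E x))) (at x)" if "x \<in> {a..b}" for x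
  proof -
    have "((\<lambda>x. complex_of_real (u x)) has_vector_derivative of_real (u' x)) (at x)"
      using ud[OF that] by (rule has_vector_derivative_of_real)
    moreover have "((\<lambda>z. exp (c * z)) has_field_derivative c * exp (c * of_real (u x))) (at (of_real (u x)))"
      by (auto intro!: derivative_eq_intros)
    ultimately have "(((\<lambda>z. exp (c * z)) \<circ> (\<lambda>x. complex_of_real (u x))) has_vector_derivative (of_real (u' x) * (c * exp (c * of_real (u x))))) (at x)"
      by (rule field_vector_diff_chain_at)
    moreover have "E = (\<lambda>x. exp (c * of_real (u x)))" by (simp add: fun_eq_iff E_def)
    ultimately show ?thesis by (simp add: o_def)
  qed
  have gd: "(g has_vector_derivative (of_real (p x) * (of_real (u' x) * (c * E x)) + of_real (p' x) * E x) / c) (at x)"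
    if "x \<in> {a..b}" for x
    unfolding g_def
    by (intro has_vector_derivative_divide has_vector_derivative_mult has_vector_derivative_of_real pd Ed that)
  have g'eq: "(of_real (p x) * (of_real (u' x) * (c * E x)) + of_real (p' x) * E x) / c = f x + h x"
    if "x \<in> {a..b}" for x
  proof -
    have "u x > 0" using pos[OF that] by (simp add: u_def)
    then have "p x * u' x = w x" by (simp add: p_def u'_def u_def)
    then have "of_real (p x) * (of_real (u' x) * (c * E x)) / c = of_real (w x) * E x"
      using c0 by (metis (no_types, lifting) mult.assoc mult.left_commute nonzero_mult_div_cancel_left of_real_mult)
    then show ?thesis unfolding f_def h_def by (simp add: add_divide_distrib)
  qed
  have gint: "((\<lambda>x. f x + h x) has_integral (g b - g a)) {a..b}"
    using fundamental_theorem_of_calculus[OF ab, of g "\<lambda>x. f x + h x"] gd g'eq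
    by (metis (no_types, lifting) has_vector_derivative_at_within)
  have gab: "g a = 0" "g b = 0" using w0 by (simp_all add: g_def p_def a_def b_def)
  have fcont: "continuous_on {a..b} f"
  proof -
    have "continuous_on {a..b} w" using wd by (meson DERIV_isCont continuous_at_imp_continuous_on)
    then show ?thesis unfolding f_def E_def u_def by (intro continuous_intros) auto
  qed
  have fint: "(f has_integral integral {a..b} f) {a..b}"
    using integrable_continuous_interval[OF fcont] by (simp add: integrable_integral)
  have hint: "(h has_integral (- integral {a..b} f)) {a..b}"
    using has_integral_diff[OF gint fint] gab by simp
  define H where "H = (D * sqrt (5/2 + CT) + 1) / (sqrt M * pi * \<bar>\<beta>\<bar>)"
  have CT0: "CT \<ge> 0"
  proof (rule ccontr)
    assume "\<not> CT \<ge> 0"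
    then have "CT * M < 0" using M by (simp add: mult_neg_pos)
    then show False using T by linarith
  qed
  have H0: "H \<ge> 0" using D M CT0 unfolding H_def by (intro divide_nonneg_nonneg) auto
  have hb: "norm (h x) \<le> H" if "x \<in> {a..b}" for x
  proof -
    have x: "M/2 \<le> x" "x \<le> 5*M/2" using that by (auto simp: a_def b_def)
    have sM: "sqrt M > 0" using M by simp
    have "u x \<le> sqrt ((5/2 + CT) * M)"
      unfolding u_def using x T by (intro real_sqrt_le_mono) (simp add: algebra_simps)
    also have "\<dots> = sqrt (5/2 + CT) * sqrt M" by (simp add: real_sqrt_mult)
    finally have ub: "u x \<le> sqrt (5/2 + CT) * sqrt M" .
    have u0: "u x \<ge> 0" using pos[OF that] by (simp add: u_def)
    have "sqrt M \<le> sqrt (4 * (x + T))" using x T by (intro real_sqrt_le_mono) simp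
    also have "\<dots> = 2 * sqrt (x + T)" by (simp only: real_sqrt_mult) simp
    finally have u'b: "\<bar>u' x\<bar> \<le> 1 / sqrt M" using sM pos[OF that] by (simp add: u'_def field_simps)
    have "\<bar>w' x * u x\<bar> \<le> D / M * (sqrt (5/2 + CT) * sqrt M)"
      unfolding abs_mult using w'b[OF that[unfolded a_def b_def]] ub u0 D
      by (intro mult_mono) auto
    also have "D / M * (sqrt (5/2 + CT) * sqrt M) = D * sqrt (5/2 + CT) / sqrt M"
      using sM by (simp add: field_simps)
    finally have t1: "\<bar>w' x * u x\<bar> \<le> D * sqrt (5/2 + CT) / sqrt M" .
    have t2: "\<bar>w x * u' x\<bar> \<le> 1 / sqrt M"
      unfolding abs_mult using wb[of x] u'b by (metis abs_ge_zero mult_le_one mult_left_le_one_le mult_mono' mult_1)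
    have "\<bar>p' x\<bar> = 2 * \<bar>w' x * u x + w x * u' x\<bar>" unfolding p'_def by (simp only: abs_mult)
    then have "\<bar>p' x\<bar> \<le> 2 * (D * sqrt (5/2 + CT) / sqrt M + 1 / sqrt M)"
    proof -
      have "\<bar>w' x * u x + w x * u' x\<bar> \<le> D * sqrt (5/2 + CT) / sqrt M + 1 / sqrt M"
        by (rule order_trans[OF abs_triangle_ineq add_mono[OF t1 t2]])
      then show ?thesis using \<open>\<bar>p' x\<bar> = 2 * \<bar>w' x * u x + w x * u' x\<bar>\<close> by simp
    qed
    also have "\<dots> = 2 * (D * sqrt (5/2 + CT) + 1) / sqrt M" by (simp add: add_divide_distrib)
    finally have pb: "\<bar>p' x\<bar> \<le> 2 * (D * sqrt (5/2 + CT) + 1) / sqrt M" .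
    have "norm (h x) = \<bar>p' x\<bar> / (2 * pi * \<bar>\<beta>\<bar>)"
      by (simp add: h_def norm_mult norm_divide nc E_eq norm_e)
    also have "\<dots> \<le> (2 * (D * sqrt (5/2 + CT) + 1) / sqrt M) / (2 * pi * \<bar>\<beta>\<bar>)"
      using pb \<beta> by (intro divide_right_mono) auto
    also have "\<dots> = H" using sM \<beta> pi_gt_zero by (simp add: H_def field_simps)
    finally show ?thesis .
  qed
  have "norm (- integral {a..b} f) \<le> H * measure lborel {a..b}"
    by (rule has_integral_bound_real[OF H0 finite.emptyI hint]) (use hb in auto)
  also have "measure lborel {a..b} = 2 * M" using ab by (simp add: a_def b_def)
  also have "H * (2 * M) = 2 * sqrt M * (D * sqrt (5/2 + CT) + 1) / (pi * \<bar>\<beta>\<bar>)"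
  proof -
    have sM: "sqrt M > 0" using M by simp
    define X where "X = D * sqrt (5/2 + CT) + 1"
    define q where "q = pi * \<bar>\<beta>\<bar>"
    have e1: "2 * M / sqrt M = 2 * sqrt M"
    proof -
      have "2 * M = 2 * sqrt M * sqrt M" using M by simp
      then show ?thesis using sM by (simp add: divide_simps)
    qed
    have "H * (2 * M) = X / q * (2 * M / sqrt M)"
      unfolding H_def X_def q_def by (simp add: field_simps)
    also have "\<dots> = 2 * sqrt M * X / q" using e1 by simp
    finally show ?thesis by (simp add: X_def q_def)
  qed
  finally show ?thesis
    by (simp add: f_def E_eq a_def b_def)
qed



lemma sym_sum_bound:
  fixes x :: "nat \<Rightarrow> real" and J :: "nat \<Rightarrow> nat \<Rightarrow> real"
  assumes "finite S" and Jsym: "\<And>n m. J n m = J m n" and J0: "\<And>n m. J n m \<ge> 0"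
  shows "(\<Sum>n\<in>S. \<Sum>m\<in>S. x n * x m * J n m) \<le> (\<Sum>n\<in>S. (x n)\<^sup>2 * (\<Sum>m\<in>S. J n m))"
proof -
  have "(\<Sum>n\<in>S. \<Sum>m\<in>S. x n * x m * J n m) \<le> (\<Sum>n\<in>S. \<Sum>m\<in>S. ((x n)\<^sup>2 / 2 * J n m + (x m)\<^sup>2 / 2 * J n m))"
  proof (intro sum_mono)
    fix n m
    have "x n * x m \<le> (x n)\<^sup>2 / 2 + (x m)\<^sup>2 / 2"
      using sum_squares_bound[of "x n" "x m"] by (simp add: power2_eq_square)
    then have "x n * x m * J n m \<le> ((x n)\<^sup>2 / 2 + (x m)\<^sup>2 / 2) * J n m"
      using J0[of n m] by (intro mult_right_mono) auto
    then show "x n * x m * J n m \<le> (x n)\<^sup>2 / 2 * J n m + (x m)\<^sup>2 / 2 * J n m"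
      by (simp add: algebra_simps)
  qed
  also have "\<dots> = (\<Sum>n\<in>S. \<Sum>m\<in>S. (x n)\<^sup>2 / 2 * J n m) + (\<Sum>n\<in>S. \<Sum>m\<in>S. (x m)\<^sup>2 / 2 * J n m)"
    by (simp add: sum.distrib)
  also have "(\<Sum>n\<in>S. \<Sum>m\<in>S. (x m)\<^sup>2 / 2 * J n m) = (\<Sum>m\<in>S. \<Sum>n\<in>S. (x m)\<^sup>2 / 2 * J m n)"
    by (subst sum.swap) (simp add: Jsym)
  also have "(\<Sum>n\<in>S. \<Sum>m\<in>S. (x n)\<^sup>2 / 2 * J n m) + (\<Sum>m\<in>S. \<Sum>n\<in>S. (x m)\<^sup>2 / 2 * J m n)
      = (\<Sum>n\<in>S. (x n)\<^sup>2 * (\<Sum>m\<in>S. J n m))"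
  proof -
    have inner: "(\<Sum>m\<in>S. (x n)\<^sup>2 / 2 * J n m) = (x n)\<^sup>2 / 2 * (\<Sum>m\<in>S. J n m)" for n
      by (simp add: sum_distrib_left)
    have "(\<Sum>n\<in>S. \<Sum>m\<in>S. (x n)\<^sup>2 / 2 * J n m) + (\<Sum>m\<in>S. \<Sum>n\<in>S. (x m)\<^sup>2 / 2 * J m n)
       = (\<Sum>n\<in>S. (x n)\<^sup>2 / 2 * (\<Sum>m\<in>S. J n m)) + (\<Sum>n\<in>S. (x n)\<^sup>2 / 2 * (\<Sum>m\<in>S. J n m))"
      by (simp only: inner)
    also have "\<dots> = (\<Sum>n\<in>S. (x n)\<^sup>2 * (\<Sum>m\<in>S. J n m))"
      by (simp add: sum.distrib[symmetric] mult.commute)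
    finally show ?thesis .
  qed
  finally show ?thesis .
qed

lemma harm_le_ln: "harm N \<le> 1 + ln (real N)" if "N \<ge> 1"
  using euler_mascheroni_sequence_decreasing[of 1 N] that by (simp add: harm_def)

lemma harm_part:
  fixes n :: nat and N :: nat
  assumes "A \<subseteq> {1..N}" "n \<in> A"
  shows "(\<Sum>m\<in>A - {n}. 1 / \<bar>real n - real m\<bar>) \<le> 2 * harm N"
proof -
  have fin: "finite A" using assms finite_subset by blast
  define A1 where "A1 = {m\<in>A. m < n}"
  define A2 where "A2 = {m\<in>A. m > n}"
  have split: "A - {n} = A1 \<union> A2" "A1 \<inter> A2 = {}" by (auto simp: A1_def A2_def)
  have fA: "finite A1" "finite A2" using fin by (auto simp: A1_def A2_def)
  have hd: "harm N = (\<Sum>j\<in>{1..N}. 1 / real j)" by (simp add: harm_def divide_inverse)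
  have s1: "(\<Sum>m\<in>A1. 1 / \<bar>real n - real m\<bar>) \<le> harm N"
  proof -
    have "(\<Sum>m\<in>A1. 1 / \<bar>real n - real m\<bar>) = (\<Sum>m\<in>A1. 1 / real (n - m))"
      by (intro sum.cong) (auto simp: A1_def of_nat_diff)
    also have "\<dots> = (\<Sum>j\<in>(\<lambda>m. n - m) ` A1. 1 / real j)"
      by (subst sum.reindex) (auto simp: inj_on_def A1_def)
    also have "\<dots> \<le> (\<Sum>j\<in>{1..N}. 1 / real j)"
      using assms by (intro sum_mono2) (force simp: A1_def subset_iff)+
    finally show ?thesis by (simp add: hd)
  qed
  have s2: "(\<Sum>m\<in>A2. 1 / \<bar>real n - real m\<bar>) \<le> harm N"
  proof -
    have "(\<Sum>m\<in>A2. 1 / \<bar>real n - real m\<bar>) = (\<Sum>m\<in>A2. 1 / real (m - n))"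
      by (intro sum.cong) (auto simp: A2_def of_nat_diff)
    also have "\<dots> = (\<Sum>j\<in>(\<lambda>m. m - n) ` A2. 1 / real j)"
      by (subst sum.reindex) (auto simp: inj_on_def A2_def)
    also have "\<dots> \<le> (\<Sum>j\<in>{1..N}. 1 / real j)"
      using assms by (intro sum_mono2) (auto simp: A2_def subset_iff)
    finally show ?thesis by (simp add: hd)
  qed
  have "(\<Sum>m\<in>A - {n}. 1 / \<bar>real n - real m\<bar>) = (\<Sum>m\<in>A1. 1 / \<bar>real n - real m\<bar>) + (\<Sum>m\<in>A2. 1 / \<bar>real n - real m\<bar>)"
    unfolding split(1) by (rule sum.union_disjoint[OF fA split(2)])
  then show ?thesis using s1 s2 by simp
qed

lemma dyadic_sub:
  assumes "L \<ge> 1/2"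
  shows "{n::nat. L < real n \<and> real n \<le> 2 * L} \<subseteq> {1..nat \<lfloor>2 * L\<rfloor>}"
proof
  fix n assume "n \<in> {n::nat. L < real n \<and> real n \<le> 2 * L}"
  then have n: "L < real n" "real n \<le> 2 * L" by auto
  then have "n \<ge> 1" using assms by (cases n) auto
  moreover have "n \<le> nat \<lfloor>2 * L\<rfloor>" using n(2) by (metis le_nat_floor floor_of_nat le_floor_iff)
  ultimately show "n \<in> {1..nat \<lfloor>2 * L\<rfloor>}" by simp
qed

lemma harm_dyadic:
  fixes L :: real
  assumes "L \<ge> 1/2"
  shows "harm (nat \<lfloor>2 * L\<rfloor>) \<le> 1 + ln (2 * L)"
proof -
  define N where "N = nat \<lfloor>2 * L\<rfloor>"
  have "N \<ge> 1" using assms by (simp add: N_def le_nat_iff le_floor_iff)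
  have "real N \<le> 2 * L" using assms by (simp add: N_def)
  then have "ln (real N) \<le> ln (2 * L)" using \<open>N \<ge> 1\<close> by simp
  then show ?thesis using harm_le_ln[OF \<open>N \<ge> 1\<close>] by (simp add: N_def)
qed



definition Kb :: "real \<Rightarrow> (nat \<Rightarrow> real) \<Rightarrow> real" where
  "Kb CT Cw = 2 * sqrt 2 * (\<bar>Cw 1\<bar> * sqrt (5/2 + CT) + 1) / pi"

lemma G_cont:
  assumes wf: "weight_fun M Cw w" and T: "T \<ge> 0"
  shows "continuous_on {M/2..5*M/2} (\<lambda>x. of_real (w x) * e (of_real (\<beta> * sqrt (x + T))))"
  unfolding e_def using weight_cont[OF wf] by (intro continuous_intros) auto

lemma trivial_bound:
  assumes wf: "weight_fun M Cw w" and M: "M \<ge> 1" and T: "T \<ge> 0"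
  shows "norm (integral {M/2..5*M/2} (\<lambda>x. of_real (w x) * e (of_real (\<beta> * sqrt (x + T))))) \<le> 2 * M"
proof -
  have int: "((\<lambda>x. of_real (w x) * e (of_real (\<beta> * sqrt (x + T)))) has_integral
      integral {M/2..5*M/2} (\<lambda>x. of_real (w x) * e (of_real (\<beta> * sqrt (x + T))))) {M/2..5*M/2}"
    using integrable_continuous_interval[OF G_cont[OF wf T]] by (simp add: integrable_integral)
  have "norm (integral {M/2..5*M/2} (\<lambda>x. of_real (w x) * e (of_real (\<beta> * sqrt (x + T))))) \<le> 1 * measure lborel {M/2..5*M/2}"
    by (rule has_integral_bound_real[OF _ finite.emptyI int])
       (use weight_bounds[OF wf] M in \<open>auto simp: norm_mult norm_e\<close>)
  also have "\<dots> = 2 * M" using M by simp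
  finally show ?thesis .
qed

lemma pair_bound:
  fixes n m :: nat and k :: int
  assumes wf: "weight_fun M Cw w" and M: "M \<ge> 1" and T: "T \<ge> 0" "T \<le> CT * M"
    and k: "k > 0" and s: "s \<in> {1, -1}" and L: "L > 0"
    and nm: "real n \<le> 2 * L" "real m \<le> 2 * L" "n \<noteq> m"
  defines "\<alpha> \<equiv> \<lambda>n. s * 2 * sqrt (real n) / real_of_int k"
  shows "norm (integral {M/2..5*M/2} (\<lambda>x. of_real (w x) * e (of_real ((\<alpha> n - \<alpha> m) * sqrt (x + T)))))
          \<le> Kb CT Cw * real_of_int k * sqrt (M * L) / \<bar>real n - real m\<bar>"
proof -
  define X where "X = \<bar>Cw 1\<bar> * sqrt (5/2 + CT) + 1"
  define \<beta> where "\<beta> = \<alpha> n - \<alpha> m"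
  have s1: "\<bar>s\<bar> = 1" using s by auto
  have dsq: "sqrt (real n) \<noteq> sqrt (real m)" using nm(3) by simp
  have \<beta>eq: "\<bar>\<beta>\<bar> = 2 * \<bar>sqrt (real n) - sqrt (real m)\<bar> / real_of_int k"
  proof -
    have "\<beta> = s * 2 * (sqrt (real n) - sqrt (real m)) / real_of_int k"
      unfolding \<beta>_def \<alpha>_def by (simp only: diff_divide_distrib right_diff_distrib)
    then show ?thesis using k s1 by (simp add: abs_mult abs_divide)
  qed
  have \<beta>0: "\<beta> \<noteq> 0" using \<beta>eq dsq k by auto
  have wd: "\<And>x. (w has_real_derivative deriv w x) (at x)" by (rule weight_deriv[OF wf])
  have w'b: "\<bar>deriv w x\<bar> \<le> \<bar>Cw 1\<bar> / M" if "x \<in> {M/2..5*M/2}" for x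
  proof -
    have "x > 0" using that M by auto
    then have "\<bar>deriv w x\<bar> \<le> Cw 1 / M" using weight_bounds[OF wf] M by auto
    also have "\<dots> \<le> \<bar>Cw 1\<bar> / M" using M by (intro divide_right_mono) auto
    finally show ?thesis .
  qed
  have osc1: "norm (integral {M/2..5*M/2} (\<lambda>x. of_real (w x) * e (of_real (\<beta> * sqrt (x + T)))))
      \<le> 2 * sqrt M * X / (pi * \<bar>\<beta>\<bar>)"
  proof -
    have wb: "\<And>x. \<bar>w x\<bar> \<le> 1" using weight_bounds[OF wf] M by auto
    show ?thesis using osc[OF wd weight_ends[OF wf] wb w'b M T \<beta>0 abs_ge_zero] by (simp add: X_def)
  qed
  have key: "1 / \<bar>sqrt (real n) - sqrt (real m)\<bar> \<le> 2 * sqrt 2 * sqrt L / \<bar>real n - real m\<bar>"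
  proof -
    have sn: "sqrt (real n) \<le> sqrt 2 * sqrt L" "sqrt (real m) \<le> sqrt 2 * sqrt L"
      using nm by (auto simp: real_sqrt_mult[symmetric])
    have "\<bar>real n - real m\<bar> = \<bar>sqrt (real n) - sqrt (real m)\<bar> * (sqrt (real n) + sqrt (real m))"
    proof -
      have "real n - real m = (sqrt (real n) - sqrt (real m)) * (sqrt (real n) + sqrt (real m))"
        by (simp add: algebra_simps)
      then show ?thesis by (simp add: abs_mult)
    qed
    also have "\<dots> \<le> \<bar>sqrt (real n) - sqrt (real m)\<bar> * (2 * sqrt 2 * sqrt L)"
      using sn by (intro mult_left_mono) auto
    finally have le: "\<bar>real n - real m\<bar> \<le> \<bar>sqrt (real n) - sqrt (real m)\<bar> * (2 * sqrt 2 * sqrt L)" .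
    have p1: "\<bar>sqrt (real n) - sqrt (real m)\<bar> > 0" using dsq by simp
    have p2: "\<bar>real n - real m\<bar> > 0" using nm(3) by simp
    show ?thesis using le p1 p2 by (simp add: field_simps)
  qed
  have "2 * sqrt M * X / (pi * \<bar>\<beta>\<bar>) = sqrt M * X * real_of_int k / pi * (1 / \<bar>sqrt (real n) - sqrt (real m)\<bar>)"
    using k dsq by (simp add: \<beta>eq field_simps)
  also have "\<dots> \<le> sqrt M * X * real_of_int k / pi * (2 * sqrt 2 * sqrt L / \<bar>real n - real m\<bar>)"
  proof -
    have CT0: "CT \<ge> 0"
    proof (rule ccontr)
      assume "\<not> CT \<ge> 0"
      then have "CT * M < 0" using M by (simp add: mult_neg_pos)
      then show False using T by linarith
    qed
    then have X0: "X \<ge> 0" by (simp add: X_def)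
    have c0: "0 \<le> sqrt M * X * real_of_int k / pi" using X0 k M by simp
    show ?thesis by (rule mult_left_mono[OF key c0])
  qed
  also have "\<dots> = Kb CT Cw * real_of_int k * sqrt (M * L) / \<bar>real n - real m\<bar>"
    by (simp add: Kb_def X_def real_sqrt_mult field_simps)
  finally show ?thesis using osc1 by (simp add: \<beta>_def)
qed



lemma core:
  fixes \<kappa> :: nat and F :: "complex \<Rightarrow> complex" and a :: "nat \<Rightarrow> complex" and k hb :: int
  assumes cusp: "is_cusp_form \<kappa> F a" and M: "M \<ge> 1" and L: "L \<ge> 1/2" and T: "T \<ge> 0" "T \<le> CT * M"
    and k: "k > 0" and wf: "weight_fun M Cw w" and s: "s \<in> {1, -1}"
  shows "mean_square a hb k T s L M w
     \<le> Ca \<kappa> a * (2 * M * L powr (-1/2) + 2 * Kb CT Cw * real_of_int k * sqrt M * (1 + ln (2 * L)))"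
proof -
  define S where "S = {n::nat. L < real n \<and> real n \<le> 2 * L}"
  have finS: "finite S" unfolding S_def by (rule dyadic_finite)
  define b where "b n = a n * of_real (real n powr (-3/4)) * e (of_real (- real n * real_of_int hb / real_of_int k))" for n
  define \<alpha> where "\<alpha> n = s * 2 * sqrt (real n) / real_of_int k" for n
  define G where "G n m x = of_real (w x) * e (of_real ((\<alpha> n - \<alpha> m) * sqrt (x + T)))" for n m x
  define I where "I n m = integral {M/2..5*M/2} (G n m)" for n m
  define f where "f x = w x * (cmod (exp_sum a hb k T s L x))\<^sup>2" for x
  define Z where "Z = (\<Sum>n\<in>S. \<Sum>m\<in>S. b n * cnj (b m) * I n m)"
  have es: "exp_sum a hb k T s L x = (\<Sum>n\<in>S. b n * e (of_real (\<alpha> n * sqrt (x + T))))" for x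
    unfolding exp_sum_def S_def
  proof (intro sum.cong refl)
    fix n
    have "s * 2 * sqrt (real n * (x + T)) / real_of_int k = \<alpha> n * sqrt (x + T)"
      by (simp add: \<alpha>_def real_sqrt_mult)
    then show "a n * of_real (real n powr (-3/4)) * e (of_real (- real n * real_of_int hb / real_of_int k)) *
          e (of_real (s * 2 * sqrt (real n * (x + T)) / real_of_int k)) = b n * e (of_real (\<alpha> n * sqrt (x + T)))"
      by (simp add: b_def)
  qed
  have pw: "of_real (f x) = (\<Sum>n\<in>S. \<Sum>m\<in>S. b n * cnj (b m) * G n m x)" for x
  proof -
    define Y where "Y = exp_sum a hb k T s L x"
    have "of_real (f x) = of_real (w x) * (Y * cnj Y)"
      by (simp add: f_def Y_def complex_norm_square[symmetric])
    also have "Y * cnj Y = (\<Sum>n\<in>S. \<Sum>m\<in>S. (b n * e (of_real (\<alpha> n * sqrt (x + T)))) * cnj (b m * e (of_real (\<alpha> m * sqrt (x + T)))))"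
      unfolding Y_def es by (simp add: sum_product cnj_sum)
    also have "of_real (w x) * \<dots> = (\<Sum>n\<in>S. \<Sum>m\<in>S. b n * cnj (b m) * G n m x)"
      unfolding sum_distrib_left
    proof (intro sum.cong refl)
      fix n m
      have "e (of_real (\<alpha> n * sqrt (x + T))) * cnj (e (of_real (\<alpha> m * sqrt (x + T))))
          = e (of_real (\<alpha> n * sqrt (x + T)) + of_real (- (\<alpha> m * sqrt (x + T))))"
        by (simp only: e_cnj_real e_add)
      also have "of_real (\<alpha> n * sqrt (x + T)) + of_real (- (\<alpha> m * sqrt (x + T))) = (of_real ((\<alpha> n - \<alpha> m) * sqrt (x + T)) :: complex)"
        by (simp add: algebra_simps)
      finally show "of_real (w x) * ((b n * e (of_real (\<alpha> n * sqrt (x + T)))) * cnj (b m * e (of_real (\<alpha> m * sqrt (x + T)))))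
          = b n * cnj (b m) * G n m x"
        by (simp add: G_def ac_simps)
    qed
    finally show ?thesis .
  qed
  have Gint: "(G n m has_integral I n m) {M/2..5*M/2}" for n m
    unfolding I_def G_def
    by (rule integrable_integral[OF integrable_continuous_interval[OF G_cont[OF wf T(1), of "\<alpha> n - \<alpha> m"]]])
  have "((\<lambda>x. (\<Sum>n\<in>S. \<Sum>m\<in>S. b n * cnj (b m) * G n m x)) has_integral Z) {M/2..5*M/2}"
    unfolding Z_def
    by (intro has_integral_sum finS has_integral_mult_right Gint)
  then have "((\<lambda>x. complex_of_real (f x)) has_integral Z) {M/2..5*M/2}"
    by (simp add: pw)
  from has_integral_linear[OF this bounded_linear_Re]
  have "(f has_integral Re Z) {M/2..5*M/2}" by (simp add: o_def)
  then have ms: "mean_square a hb k T s L M w = Re Z"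
    unfolding mean_square_def f_def by (rule integral_unique)
  define J where "J n m = (if n = m then 2 * M else Kb CT Cw * real_of_int k * sqrt (M * L) / \<bar>real n - real m\<bar>)" for n m
  have Jsym: "J n m = J m n" for n m by (simp add: J_def abs_minus_commute)
  have Kb0: "Kb CT Cw \<ge> 0"
  proof -
    have CT0: "CT \<ge> 0"
    proof (rule ccontr)
      assume "\<not> CT \<ge> 0"
      then have "CT * M < 0" using M by (simp add: mult_neg_pos)
      then show False using T by linarith
    qed
    then show ?thesis by (simp add: Kb_def)
  qed
  have J0: "J n m \<ge> 0" for n m using M Kb0 k L by (simp add: J_def)
  have IJ: "norm (I n m) \<le> J n m" if "n \<in> S" "m \<in> S" for n m
  proof (cases "n = m")
    case True
    have "J n m = 2 * M" using True by (simp add: J_def)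
    moreover have "norm (I n m) \<le> 2 * M" unfolding I_def G_def by (rule trivial_bound[OF wf M T(1)])
    ultimately show ?thesis by simp
  next
    case False
    have "real n \<le> 2 * L" "real m \<le> 2 * L" using that by (auto simp: S_def)
    then have "norm (I n m) \<le> Kb CT Cw * real_of_int k * sqrt (M * L) / \<bar>real n - real m\<bar>"
      unfolding I_def G_def \<alpha>_def using L by (intro pair_bound[OF wf M T k s _ _ _ False]) auto
    moreover have "J n m = Kb CT Cw * real_of_int k * sqrt (M * L) / \<bar>real n - real m\<bar>"
      using False by (simp add: J_def)
    ultimately show ?thesis by simp
  qed
  have "Re Z \<le> norm Z" by (rule complex_Re_le_cmod)
  also have "norm Z \<le> (\<Sum>n\<in>S. \<Sum>m\<in>S. norm (b n * cnj (b m) * I n m))"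
    unfolding Z_def by (intro order_trans[OF norm_sum] sum_mono norm_sum)
  also have "\<dots> \<le> (\<Sum>n\<in>S. \<Sum>m\<in>S. norm (b n) * norm (b m) * J n m)"
    using IJ by (intro sum_mono) (auto simp: norm_mult intro!: mult_left_mono)
  also have "\<dots> \<le> (\<Sum>n\<in>S. (norm (b n))\<^sup>2 * (\<Sum>m\<in>S. J n m))"
    by (rule sym_sum_bound[OF finS Jsym J0])
  also have "\<dots> \<le> (\<Sum>n\<in>S. (norm (b n))\<^sup>2 * (2 * M + Kb CT Cw * real_of_int k * sqrt (M * L) * (2 * (1 + ln (2 * L)))))"
  proof (intro sum_mono mult_left_mono)
    fix n assume n: "n \<in> S"
    define K where "K = Kb CT Cw * real_of_int k * sqrt (M * L)"
    have K0: "K \<ge> 0" using Kb0 k L M by (simp add: K_def)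
    have "(\<Sum>m\<in>S. J n m) = J n n + (\<Sum>m\<in>S - {n}. J n m)"
      using finS n by (rule sum.remove)
    also have "(\<Sum>m\<in>S - {n}. J n m) = K * (\<Sum>m\<in>S - {n}. 1 / \<bar>real n - real m\<bar>)"
      by (simp add: J_def K_def sum_distrib_left)
    finally have eq: "(\<Sum>m\<in>S. J n m) = 2 * M + K * (\<Sum>m\<in>S - {n}. 1 / \<bar>real n - real m\<bar>)"
      by (simp add: J_def)
    have "(\<Sum>m\<in>S - {n}. 1 / \<bar>real n - real m\<bar>) \<le> 2 * harm (nat \<lfloor>2 * L\<rfloor>)"
      using harm_part[OF dyadic_sub[OF L] n[unfolded S_def]] by (simp add: S_def)
    also have "\<dots> \<le> 2 * (1 + ln (2 * L))" using harm_dyadic[OF L] by simp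
    finally have h: "(\<Sum>m\<in>S - {n}. 1 / \<bar>real n - real m\<bar>) \<le> 2 * (1 + ln (2 * L))" .
    show "(\<Sum>m\<in>S. J n m) \<le> 2 * M + Kb CT Cw * real_of_int k * sqrt (M * L) * (2 * (1 + ln (2 * L)))"
      unfolding eq K_def[symmetric] using mult_left_mono[OF h K0] by simp
  qed simp
  also have "\<dots> = (\<Sum>n\<in>S. (norm (b n))\<^sup>2) * (2 * M + Kb CT Cw * real_of_int k * sqrt (M * L) * (2 * (1 + ln (2 * L))))"
    by (simp add: sum_distrib_right)
  also have "\<dots> \<le> (Ca \<kappa> a * L powr (-1/2)) * (2 * M + Kb CT Cw * real_of_int k * sqrt (M * L) * (2 * (1 + ln (2 * L))))"
  proof (rule mult_right_mono)
    have L0: "L > 0" using L by simp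
    have "(\<Sum>n\<in>S. (norm (b n))\<^sup>2) \<le> (\<Sum>n\<in>S. (norm (a n))\<^sup>2 * L powr (-3/2))"
    proof (intro sum_mono)
      fix n assume n: "n \<in> S"
      then have nL: "L < real n" by (simp add: S_def)
      have "(norm (b n))\<^sup>2 = (norm (a n))\<^sup>2 * (real n powr (-3/4))\<^sup>2"
        by (simp add: b_def norm_mult norm_e power_mult_distrib)
      also have "(real n powr (-3/4))\<^sup>2 = real n powr (-3/2)"
        by (simp add: power2_eq_square powr_add[symmetric])
      also have "real n powr (-3/2) \<le> L powr (-3/2)"
        using nL L0 by (intro powr_mono2') auto
      finally show "(norm (b n))\<^sup>2 \<le> (norm (a n))\<^sup>2 * L powr (-3/2)" by (simp add: mult_left_mono)
    qed
    also have "\<dots> = (\<Sum>n\<in>S. (norm (a n))\<^sup>2) * L powr (-3/2)" by (simp add: sum_distrib_right)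
    also have "\<dots> \<le> (Ca \<kappa> a * L) * L powr (-3/2)"
      using dyadic_coef[OF cusp L] by (intro mult_right_mono) (auto simp: S_def)
    also have "(Ca \<kappa> a * L) * L powr (-3/2) = Ca \<kappa> a * L powr (-1/2)"
      using L0 powr_add[of L 1 "-3/2"] by simp
    finally show "(\<Sum>n\<in>S. (norm (b n))\<^sup>2) \<le> Ca \<kappa> a * L powr (-1/2)" .
    show "0 \<le> 2 * M + Kb CT Cw * real_of_int k * sqrt (M * L) * (2 * (1 + ln (2 * L)))"
      using M Kb0 k L by (intro add_nonneg_nonneg mult_nonneg_nonneg) auto
  qed
  also have "\<dots> = Ca \<kappa> a * (2 * M * L powr (-1/2) + 2 * Kb CT Cw * real_of_int k * sqrt M * (1 + ln (2 * L)))"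
  proof -
    have L0: "L > 0" using L by simp
    have "sqrt (M * L) * L powr (-1/2) = sqrt M"
      using L0 M by (simp add: real_sqrt_mult powr_minus powr_half_sqrt[symmetric] field_simps)
    then show ?thesis by (simp add: algebra_simps)
  qed
  finally show ?thesis using ms by simp
qed



lemma ln_le_powr:
  fixes x d :: real assumes "x > 0" "d > 0"
  shows "ln x \<le> x powr d / d"
proof -
  have "ln (x powr d) \<le> x powr d - 1" using assms by (intro ln_le_minus_one) auto
  then have "d * ln x \<le> x powr d" using assms by (simp add: ln_powr)
  then show ?thesis using assms by (simp add: field_simps)
qed

lemma log_bound:
  fixes L d :: real assumes L: "L \<ge> 1/2" and d: "d > 0"
  shows "1 + ln (2 * L) \<le> 2 powr d * (1 + 1 / d) * L powr d"
proof -
  have L2: "2 * L \<ge> 1" using L by simp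
  have one: "1 \<le> (2 * L) powr d" using L2 d by (simp add: ge_one_powr_ge_zero)
  have "ln (2 * L) \<le> (2 * L) powr d / d" using L2 d by (intro ln_le_powr) auto
  then have "1 + ln (2 * L) \<le> (2 * L) powr d + (2 * L) powr d / d" using one by simp
  also have "\<dots> = 2 powr d * (1 + 1 / d) * L powr d"
    using L by (simp add: powr_mult field_simps)
  finally show ?thesis .
qed

lemma Ca_nonneg: "Ca \<kappa> a \<ge> 0" by (simp add: Ca_def)

lemma core':
  fixes \<kappa> :: nat and F :: "complex \<Rightarrow> complex" and a :: "nat \<Rightarrow> complex" and k hb :: int
  assumes cusp: "is_cusp_form \<kappa> F a" and M: "M \<ge> 1" and L: "L \<ge> 1/2" and T: "T \<ge> 0" "T \<le> CT * M"
    and k: "k > 0" and wf: "weight_fun M Cw w" and s: "s \<in> {1, -1}"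
  shows "mean_square a hb k T s L M w
     \<le> Ca \<kappa> a * (2 * M * L powr (-1/2) + 2 * \<bar>Kb CT Cw\<bar> * real_of_int k * sqrt M * (1 + ln (2 * L)))"
proof -
  have "1 + ln (2 * L) \<ge> 0" using L by simp
  then have "2 * Kb CT Cw * real_of_int k * sqrt M * (1 + ln (2 * L)) \<le> 2 * \<bar>Kb CT Cw\<bar> * real_of_int k * sqrt M * (1 + ln (2 * L))"
    using k M by (intro mult_right_mono) auto
  then show ?thesis using core[OF assms] Ca_nonneg[of \<kappa> a]
    by (smt (verit, ccfv_SIG) mult_left_mono)
qed



lemma kL_bound:
  fixes k M L \<theta> CL :: real
  assumes k: "k \<ge> 1" and M: "M \<ge> 1" and L: "L > 0" and th: "\<theta> > 0"
    and LC: "L \<le> CL * M powr (1 - \<theta>) * k powr (-2)"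
  shows "k * L powr (1/2 + \<theta>/2) \<le> \<bar>CL\<bar> powr (1/2 + \<theta>/2) * sqrt M"
proof -
  define p where "p = 1/2 + \<theta>/2"
  have p0: "p > 0" using th by (simp add: p_def)
  have mp: "M powr (1 - \<theta>) > 0" "k powr (-2) > 0" using M k by auto
  have CL0: "CL > 0"
  proof (rule ccontr)
    assume "\<not> CL > 0"
    then have "CL * M powr (1 - \<theta>) * k powr (-2) \<le> 0"
      using mp by (simp add: mult_nonpos_nonneg)
    then show False using LC L by linarith
  qed
  have "L powr p \<le> (CL * M powr (1 - \<theta>) * k powr (-2)) powr p"
    using LC L p0 by (intro powr_mono2) auto
  also have "\<dots> = CL powr p * M powr ((1 - \<theta>) * p) * k powr (-2 * p)"
    using CL0 mp by (simp add: powr_mult powr_powr)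
  finally have Lp: "L powr p \<le> CL powr p * M powr ((1 - \<theta>) * p) * k powr (-2 * p)" .
  have "k * L powr p \<le> k * (CL powr p * M powr ((1 - \<theta>) * p) * k powr (-2 * p))"
    using Lp k by (intro mult_left_mono) auto
  also have "\<dots> = CL powr p * M powr ((1 - \<theta>) * p) * (k powr 1 * k powr (-2 * p))"
    using k by simp
  also have "k powr 1 * k powr (-2 * p) = k powr (- \<theta>)"
  proof -
    have "k powr 1 * k powr (-2 * p) = k powr (1 + -2 * p)" by (simp only: powr_add)
    also have "1 + -2 * p = - \<theta>" by (simp add: p_def)
    finally show ?thesis .
  qed
  also have "k powr (- \<theta>) \<le> 1"
    using k th by (simp add: powr_minus field_simps ge_one_powr_ge_zero)
  also have "M powr ((1 - \<theta>) * p) \<le> M powr (1/2)"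
  proof (rule powr_mono)
    have "(1 - \<theta>) * p = 1/2 - \<theta>^2/2" unfolding p_def by (simp add: field_simps power2_eq_square)
    then show "(1 - \<theta>) * p \<le> 1/2" by simp
  qed (use M in simp)
  also have "M powr (1/2) = sqrt M" using M by (simp add: powr_half_sqrt)
  finally have "k * L powr p \<le> CL powr p * sqrt M * 1"
    using CL0 M by (simp add: mult_left_mono)
  then show ?thesis using CL0 by (simp add: p_def)
qed

lemma part1:
  fixes \<kappa> :: nat and F :: "complex \<Rightarrow> complex" and a :: "nat \<Rightarrow> complex"
  assumes cusp: "is_cusp_form \<kappa> F a" and eps: "\<epsilon> > 0"
  shows "\<exists>C::real.
       \<forall>(M::real) (L::real) (T::real) (h::int) (k::int) (hb::int) (w::real \<Rightarrow> real) (s::real).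
         1 \<le> M \<longrightarrow> 1/2 \<le> L \<longrightarrow> 0 \<le> T \<longrightarrow> T \<le> CT * M \<longrightarrow>
         0 < k \<longrightarrow> coprime h k \<longrightarrow> [h * hb = 1] (mod k) \<longrightarrow>
         weight_fun M Cw w \<longrightarrow> s \<in> {1, -1} \<longrightarrow>
         mean_square a hb k T s L M w
           \<le> C * (M * L powr (-1/2) + L powr \<epsilon> * real_of_int k * M powr (1/2 + \<epsilon>))"
proof -
  define C1 where "C1 = 2 powr \<epsilon> * (1 + 1 / \<epsilon>)"
  define X where "X = 2 * \<bar>Kb CT Cw\<bar> * C1"
  have X0: "X \<ge> 0" using eps by (simp add: X_def C1_def)
  show ?thesis
  proof (intro exI[of _ "Ca \<kappa> a * (2 + X)"] allI impI)
    fix M L T :: real and h k hb :: int and w :: "real \<Rightarrow> real" and s :: real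
    assume M: "1 \<le> M" and L: "1/2 \<le> L" and T: "0 \<le> T" "T \<le> CT * M" and k: "0 < k"
      and wf: "weight_fun M Cw w" and s: "s \<in> {1, -1}"
    define A where "A = M * L powr (-1/2)"
    define B where "B = L powr \<epsilon> * real_of_int k * M powr (1/2 + \<epsilon>)"
    have A0: "A \<ge> 0" and B0: "B \<ge> 0" using M L k by (auto simp: A_def B_def)
    have lb: "1 + ln (2 * L) \<le> C1 * L powr \<epsilon>" using log_bound[OF L eps] by (simp add: C1_def)
    have sq: "sqrt M \<le> M powr (1/2 + \<epsilon>)"
    proof -
      have "sqrt M = M powr (1/2)" using M by (simp add: powr_half_sqrt)
      also have "\<dots> \<le> M powr (1/2 + \<epsilon>)" using M eps by (intro powr_mono) auto
      finally show ?thesis .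
    qed
    have "2 * \<bar>Kb CT Cw\<bar> * real_of_int k * sqrt M * (1 + ln (2 * L))
        \<le> 2 * \<bar>Kb CT Cw\<bar> * real_of_int k * M powr (1/2 + \<epsilon>) * (C1 * L powr \<epsilon>)"
      using lb sq k M L by (intro mult_mono mult_left_mono) (auto simp: add_nonneg_nonneg)
    also have "\<dots> = X * B" by (simp add: X_def B_def ac_simps)
    finally have t2: "2 * \<bar>Kb CT Cw\<bar> * real_of_int k * sqrt M * (1 + ln (2 * L)) \<le> X * B" .
    have "mean_square a hb k T s L M w \<le> Ca \<kappa> a * (2 * A + 2 * \<bar>Kb CT Cw\<bar> * real_of_int k * sqrt M * (1 + ln (2 * L)))"
      using core'[OF cusp M L T k wf s] by (simp add: A_def mult.assoc)
    also have "\<dots> \<le> Ca \<kappa> a * (2 * A + X * B)"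
      using t2 Ca_nonneg by (intro mult_left_mono) auto
    also have "\<dots> \<le> Ca \<kappa> a * ((2 + X) * (A + B))"
    proof (intro mult_left_mono Ca_nonneg)
      show "2 * A + X * B \<le> (2 + X) * (A + B)"
        using A0 B0 X0 by (simp add: algebra_simps add_nonneg_nonneg)
    qed
    finally show "mean_square a hb k T s L M w \<le> Ca \<kappa> a * (2 + X) * (M * L powr (-1/2) + L powr \<epsilon> * real_of_int k * M powr (1/2 + \<epsilon>))"
      by (simp add: A_def B_def mult.assoc)
  qed
qed

lemma part2:
  fixes \<kappa> :: nat and F :: "complex \<Rightarrow> complex" and a :: "nat \<Rightarrow> complex"
  assumes cusp: "is_cusp_form \<kappa> F a" and th: "\<theta> > 0"
  shows "\<exists>C::real.
       \<forall>(M::real) (L::real) (T::real) (h::int) (k::int) (hb::int) (w::real \<Rightarrow> real) (s::real).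
         1 \<le> M \<longrightarrow> 1/2 \<le> L \<longrightarrow> 0 \<le> T \<longrightarrow> T \<le> CT * M \<longrightarrow>
         0 < k \<longrightarrow> coprime h k \<longrightarrow> [h * hb = 1] (mod k) \<longrightarrow>
         weight_fun M Cw w \<longrightarrow> s \<in> {1, -1} \<longrightarrow>
         L \<le> CL * M powr (1 - \<theta>) * real_of_int k powr (-2) \<longrightarrow>
         mean_square a hb k T s L M w \<le> C * (M * L powr (-1/2))"
proof -
  define d where "d = \<theta> / 2"
  have d0: "d > 0" using th by (simp add: d_def)
  define C1 where "C1 = 2 powr d * (1 + 1 / d)"
  define X where "X = 2 * \<bar>Kb CT Cw\<bar> * C1 * \<bar>CL\<bar> powr (1/2 + d)"
  have X0: "X \<ge> 0" using d0 by (simp add: X_def C1_def)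
  show ?thesis
  proof (intro exI[of _ "Ca \<kappa> a * (2 + X)"] allI impI)
    fix M L T :: real and h k hb :: int and w :: "real \<Rightarrow> real" and s :: real
    assume M: "1 \<le> M" and L: "1/2 \<le> L" and T: "0 \<le> T" "T \<le> CT * M" and k: "0 < k"
      and wf: "weight_fun M Cw w" and s: "s \<in> {1, -1}"
      and LC: "L \<le> CL * M powr (1 - \<theta>) * real_of_int k powr (-2)"
    define A where "A = M * L powr (-1/2)"
    have A0: "A \<ge> 0" using M L by (auto simp: A_def)
    have L0: "L > 0" using L by simp
    have lb: "1 + ln (2 * L) \<le> C1 * L powr d" using log_bound[OF L d0] by (simp add: C1_def)
    have k1: "real_of_int k \<ge> 1" using k by simp
    have kb: "real_of_int k * L powr (1/2 + d) \<le> \<bar>CL\<bar> powr (1/2 + d) * sqrt M"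
      using kL_bound[OF k1 M L0 th LC] by (simp add: d_def)
    have "real_of_int k * L powr d = real_of_int k * L powr (1/2 + d) * L powr (-1/2)"
      using L0 by (simp add: powr_add[symmetric])
    also have "\<dots> \<le> \<bar>CL\<bar> powr (1/2 + d) * sqrt M * L powr (-1/2)"
      using kb by (intro mult_right_mono) auto
    finally have kLd: "real_of_int k * L powr d \<le> \<bar>CL\<bar> powr (1/2 + d) * sqrt M * L powr (-1/2)" .
    have C10: "C1 \<ge> 0" using d0 by (simp add: C1_def)
    have "2 * \<bar>Kb CT Cw\<bar> * real_of_int k * sqrt M * (1 + ln (2 * L))
        \<le> 2 * \<bar>Kb CT Cw\<bar> * real_of_int k * sqrt M * (C1 * L powr d)"
      using lb k M by (intro mult_left_mono) auto
    also have "\<dots> = 2 * \<bar>Kb CT Cw\<bar> * C1 * sqrt M * (real_of_int k * L powr d)"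
      by (simp add: ac_simps)
    also have "\<dots> \<le> 2 * \<bar>Kb CT Cw\<bar> * C1 * sqrt M * (\<bar>CL\<bar> powr (1/2 + d) * sqrt M * L powr (-1/2))"
      using kLd C10 M by (intro mult_left_mono) auto
    also have "\<dots> = X * A"
    proof -
      define q where "q = sqrt M"
      have Mq: "M = q * q" using M by (simp add: q_def)
      show ?thesis unfolding X_def A_def q_def[symmetric] Mq by (simp add: mult_ac)
    qed
    finally have t2: "2 * \<bar>Kb CT Cw\<bar> * real_of_int k * sqrt M * (1 + ln (2 * L)) \<le> X * A" .
    have "mean_square a hb k T s L M w \<le> Ca \<kappa> a * (2 * A + 2 * \<bar>Kb CT Cw\<bar> * real_of_int k * sqrt M * (1 + ln (2 * L)))"
      using core'[OF cusp M L T k wf s] by (simp add: A_def mult.assoc)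
    also have "\<dots> \<le> Ca \<kappa> a * (2 * A + X * A)"
      using t2 Ca_nonneg by (intro mult_left_mono) auto
    also have "\<dots> = Ca \<kappa> a * (2 + X) * A" by (simp add: algebra_simps)
    finally show "mean_square a hb k T s L M w \<le> Ca \<kappa> a * (2 + X) * (M * L powr (-1/2))"
      by (simp add: A_def)
  qed
qed

theorem lemma3:
  fixes \<kappa> :: nat and F :: "complex \<Rightarrow> complex" and a :: "nat \<Rightarrow> complex"
  assumes "is_cusp_form \<kappa> F a"
  shows
   "(\<forall>\<epsilon>>0. \<forall>(CT::real) (Cw::nat \<Rightarrow> real). \<exists>C::real.
       \<forall>(M::real) (L::real) (T::real) (h::int) (k::int) (hb::int) (w::real \<Rightarrow> real) (s::real).
         1 \<le> M \<longrightarrow> 1/2 \<le> L \<longrightarrow> 0 \<le> T \<longrightarrow> T \<le> CT * M \<longrightarrow>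
         0 < k \<longrightarrow> coprime h k \<longrightarrow> [h * hb = 1] (mod k) \<longrightarrow>
         weight_fun M Cw w \<longrightarrow> s \<in> {1, -1} \<longrightarrow>
         mean_square a hb k T s L M w
           \<le> C * (M * L powr (-1/2) + L powr \<epsilon> * real_of_int k * M powr (1/2 + \<epsilon>)))
    \<and>
    (\<forall>\<theta>>0. \<forall>(CT::real) (CL::real) (Cw::nat \<Rightarrow> real). \<exists>C::real.
       \<forall>(M::real) (L::real) (T::real) (h::int) (k::int) (hb::int) (w::real \<Rightarrow> real) (s::real).
         1 \<le> M \<longrightarrow> 1/2 \<le> L \<longrightarrow> 0 \<le> T \<longrightarrow> T \<le> CT * M \<longrightarrow>
         0 < k \<longrightarrow> coprime h k \<longrightarrow> [h * hb = 1] (mod k) \<longrightarrow>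
         weight_fun M Cw w \<longrightarrow> s \<in> {1, -1} \<longrightarrow>
         L \<le> CL * M powr (1 - \<theta>) * real_of_int k powr (-2) \<longrightarrow>
         mean_square a hb k T s L M w \<le> C * (M * L powr (-1/2)))"
  proof (intro conjI allI impI)
  fix \<epsilon> :: real and CT :: real and Cw :: "nat \<Rightarrow> real"
  assume "\<epsilon> > 0"
  then show "\<exists>C::real.
       \<forall>(M::real) (L::real) (T::real) (h::int) (k::int) (hb::int) (w::real \<Rightarrow> real) (s::real).
         1 \<le> M \<longrightarrow> 1/2 \<le> L \<longrightarrow> 0 \<le> T \<longrightarrow> T \<le> CT * M \<longrightarrow>
         0 < k \<longrightarrow> coprime h k \<longrightarrow> [h * hb = 1] (mod k) \<longrightarrow>
         weight_fun M Cw w \<longrightarrow> s \<in> {1, -1} \<longrightarrow>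
         mean_square a hb k T s L M w
           \<le> C * (M * L powr (-1/2) + L powr \<epsilon> * real_of_int k * M powr (1/2 + \<epsilon>))"
    by (rule part1[OF assms])
next
  fix \<theta> :: real and CT CL :: real and Cw :: "nat \<Rightarrow> real"
  assume "\<theta> > 0"
  then show "\<exists>C::real.
       \<forall>(M::real) (L::real) (T::real) (h::int) (k::int) (hb::int) (w::real \<Rightarrow> real) (s::real).
         1 \<le> M \<longrightarrow> 1/2 \<le> L \<longrightarrow> 0 \<le> T \<longrightarrow> T \<le> CT * M \<longrightarrow>
         0 < k \<longrightarrow> coprime h k \<longrightarrow> [h * hb = 1] (mod k) \<longrightarrow>
         weight_fun M Cw w \<longrightarrow> s \<in> {1, -1} \<longrightarrow>
         L \<le> CL * M powr (1 - \<theta>) * real_of_int k powr (-2) \<longrightarrow>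
         mean_square a hb k T s L M w \<le> C * (M * L powr (-1/2))"
    by (rule part2[OF assms])
qed

end
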